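(* Let $\alpha:M_s\to M_s$ be a completely positive linear map on the algebra of complex $s\times s$ matrices. If $\alpha^m=0$ for some integer $m\ge1$, then $\alpha^s=0$; in particular the nilpotency index of $\alpha$ is at most $s$. *)

theory Defs
  imports "HOL-Analysis.Analysis"
begin

text \<open>Complex s x s matrices are rendered as complex^'n^'n with s = CARD('n).\<close>

definition mat_scale :: "complex \<Rightarrow> complex^'n^'m \<Rightarrow> complex^'n^'m" where
  "mat_scale c A = (\<chi> i j. c * A$i$j)"

definition clinear_map :: "(complex^'n^'n \<Rightarrow> complex^'n^'n) \<Rightarrow> bool" where
  "clinear_map \<alpha> \<longleftrightarrow>
     (\<forall>A B. \<alpha> (A + B) = \<alpha> A + \<alpha> B) \<and> (\<forall>c A. \<alpha> (mat_scale c A) = mat_scale c (\<alpha> A))"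

text \<open>A k x k block matrix X with blocks X i j in M_s (i, j < k), viewed as an element of
  M_k(M_s) = M_{ks}, is positive semidefinite iff v* X v is real and nonnegative for
  every vector v in C^{ks} (written as k blocks v i in C^s).\<close>
definition block_psd :: "nat \<Rightarrow> (nat \<Rightarrow> nat \<Rightarrow> complex^'n^'n) \<Rightarrow> bool" where
  "block_psd k X \<longleftrightarrow>
     (\<forall>v :: nat \<Rightarrow> complex^'n.
        let q = (\<Sum>i<k. \<Sum>j<k. \<Sum>a\<in>UNIV. \<Sum>b\<in>UNIV. cnj (v i $ a) * (X i j $ a $ b) * (v j $ b))
        in Im q = 0 \<and> Re q \<ge> 0)"

text \<open>Complete positivity: id_k tensor alpha maps positive elements of M_k(M_s) to
  positive elements, for every k.\<close>
definition completely_positive :: "(complex^'n^'n \<Rightarrow> complex^'n^'n) \<Rightarrow> bool" where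
  "completely_positive \<alpha> \<longleftrightarrow>
     (\<forall>k X. block_psd k X \<longrightarrow> block_psd k (\<lambda>i j. \<alpha> (X i j)))"

end

theory Submission
  imports Defs
begin


definition bf :: "complex^'n^'n \<Rightarrow> complex^'n \<Rightarrow> complex^'n \<Rightarrow> complex" where
  "bf A x y = (\<Sum>a\<in>UNIV. \<Sum>b\<in>UNIV. cnj (x $ a) * (A $ a $ b) * (y $ b))"

abbreviation qf :: "complex^'n^'n \<Rightarrow> complex^'n \<Rightarrow> complex" where
  "qf A x \<equiv> bf A x x"

definition psd :: "complex^'n^'n \<Rightarrow> bool" where
  "psd A \<longleftrightarrow> (\<forall>v. Im (qf A v) = 0 \<and> Re (qf A v) \<ge> 0)"

lemma bf_add1: "bf A (x + y) z = bf A x z + bf A y z"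
  by (simp add: bf_def algebra_simps sum.distrib)
lemma bf_add2: "bf A x (y + z) = bf A x y + bf A x z"
  by (simp add: bf_def algebra_simps sum.distrib)
lemma bf_smult1: "bf A (c *s x) y = cnj c * bf A x y"
  by (simp add: bf_def sum_distrib_left algebra_simps)
lemma bf_smult2: "bf A x (c *s y) = c * bf A x y"
  by (simp add: bf_def sum_distrib_left algebra_simps)
lemma bf_minusM: "bf (A - B) x y = bf A x y - bf B x y"
  by (simp add: bf_def algebra_simps sum_subtractf)
lemma bf_scaleM: "bf (mat_scale c A) x y = c * bf A x y"
  by (simp add: bf_def mat_scale_def sum_distrib_left algebra_simps)
lemma bf_zero1[simp]: "bf A 0 y = 0" by (simp add: bf_def)
lemma bf_zeroM[simp]: "bf 0 x y = 0" by (simp add: bf_def)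
lemma scaleR_vec_smult: "(r::real) *\<^sub>R (x::complex^'n) = complex_of_real r *s x"
  by (simp add: vec_eq_iff) (simp add: scaleR_conv_of_real)

lemma lin_zero: "(\<forall>t::real. a + t * c \<ge> 0) \<Longrightarrow> c = 0"
proof (rule ccontr)
  assume h: "\<forall>t::real. a + t * c \<ge> 0" "c \<noteq> 0"
  have "a + (- (\<bar>a\<bar> + 1) / c) * c \<ge> 0" using h by blast
  moreover have "(- (\<bar>a\<bar> + 1) / c) * c = - (\<bar>a\<bar> + 1)" using h(2) by simp
  ultimately show False by linarith
qed

lemma psd_ker:
  assumes "psd A" "qf A v = 0"
  shows "bf A v w = 0 \<and> bf A w v = 0"
proof -
  have exp: "qf A (w + c *s v) = qf A w + (c * bf A w v + cnj c * bf A v w)" for c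
    using assms(2) by (simp add: bf_add1 bf_add2 bf_smult1 bf_smult2 algebra_simps)
  have P: "Im (qf A (w + c *s v)) = 0 \<and> Re (qf A (w + c *s v)) \<ge> 0" for c
    using assms(1) unfolding psd_def by blast
  let ?z = "bf A w v + bf A v w"
  let ?y = "\<i> * bf A w v - \<i> * bf A v w"
  have e1: "qf A (w + complex_of_real t *s v) = qf A w + complex_of_real t * ?z" for t
    using exp[of "complex_of_real t"] by (simp add: algebra_simps)
  have e2: "qf A (w + (\<i> * complex_of_real t) *s v) = qf A w + complex_of_real t * ?y" for t
    using exp[of "\<i> * complex_of_real t"] by (simp add: algebra_simps)
  have "\<forall>t::real. Re (qf A w) + t * Re ?z \<ge> 0"
    proof fix t :: real show "Re (qf A w) + t * Re ?z \<ge> 0" using P[of "complex_of_real t"] by (simp only: e1) simp qed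
  hence r1: "Re ?z = 0" by (rule lin_zero)
  have "\<forall>t::real. Im (qf A w) + t * Im ?z \<ge> 0"
    proof fix t :: real show "Im (qf A w) + t * Im ?z \<ge> 0" using P[of "complex_of_real t"] by (simp only: e1) simp qed
  hence i1: "Im ?z = 0" by (rule lin_zero)
  have "\<forall>t::real. Re (qf A w) + t * Re ?y \<ge> 0"
    proof fix t :: real show "Re (qf A w) + t * Re ?y \<ge> 0" using P[of "\<i> * complex_of_real t"] by (simp only: e2) simp qed
  hence r2: "Re ?y = 0" by (rule lin_zero)
  have "\<forall>t::real. Im (qf A w) + t * Im ?y \<ge> 0"
    proof fix t :: real show "Im (qf A w) + t * Im ?y \<ge> 0" using P[of "\<i> * complex_of_real t"] by (simp only: e2) simp qed
  hence i2: "Im ?y = 0" by (rule lin_zero)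
  show ?thesis using r1 i1 r2 i2 by (simp add: complex_eq_iff)
qed



definition Ker :: "complex^'n^'n \<Rightarrow> (complex^'n) set" where
  "Ker A = {v. qf A v = 0}"

lemma qf_add: "qf A (v + w) = qf A v + bf A v w + bf A w v + qf A w"
  by (simp add: bf_add1 bf_add2)

lemma ker_add: "psd A \<Longrightarrow> v \<in> Ker A \<Longrightarrow> w \<in> Ker A \<Longrightarrow> v + w \<in> Ker A"
  using psd_ker[of A v w] by (simp add: Ker_def qf_add)

lemma ker_add1: "psd A \<Longrightarrow> v \<in> Ker A \<Longrightarrow> qf A (v + w) = qf A w"
  using psd_ker[of A v w] by (simp add: Ker_def qf_add)

lemma ker_smult: "v \<in> Ker A \<Longrightarrow> c *s v \<in> Ker A"
  by (simp add: Ker_def bf_smult1 bf_smult2)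

lemma ker_subspace: "psd A \<Longrightarrow> subspace (Ker A)"
  unfolding subspace_def
  by (auto simp: ker_add scaleR_vec_smult ker_smult) (simp add: Ker_def)

lemma ker_vsubspace: "psd A \<Longrightarrow> vec.subspace (Ker A)"
  unfolding vec.subspace_def
  by (auto simp: ker_add ker_smult) (simp add: Ker_def)

lemma qf_scaleR: "qf A (r *\<^sub>R w) = complex_of_real (r^2) * qf A w"
  by (simp add: scaleR_vec_smult bf_smult1 bf_smult2 power2_eq_square)

lemma qf_bound: "Re (qf B w) \<le> (\<Sum>a\<in>UNIV. \<Sum>b\<in>UNIV. norm (B$a$b)) * (norm w)^2"
proof -
  have "Re (qf B w) \<le> norm (qf B w)" by (rule complex_Re_le_cmod)
  also have "\<dots> \<le> (\<Sum>a\<in>UNIV. \<Sum>b\<in>UNIV. norm (cnj (w $ a) * (B $ a $ b) * (w $ b)))"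
    unfolding bf_def by (intro order_trans[OF norm_sum] sum_mono norm_sum)
  also have "\<dots> \<le> (\<Sum>a\<in>UNIV. \<Sum>b\<in>UNIV. norm (B$a$b) * (norm w)^2)"
  proof (intro sum_mono)
    fix a b
    have "norm (w$a) * norm (w$b) \<le> norm w * norm w"
      by (intro mult_mono Finite_Cartesian_Product.norm_nth_le) auto
    then have "norm (B$a$b) * (norm (w$a) * norm (w$b)) \<le> norm (B$a$b) * (norm w * norm w)"
      by (intro mult_left_mono) auto
    then show "norm (cnj (w $ a) * (B $ a $ b) * (w $ b)) \<le> norm (B$a$b) * (norm w)^2"
      by (simp add: norm_mult power2_eq_square mult_ac)
  qed
  also have "\<dots> = (\<Sum>a\<in>UNIV. \<Sum>b\<in>UNIV. norm (B$a$b)) * (norm w)^2"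
    by (simp add: sum_distrib_right)
  finally show ?thesis .
qed

lemma const_orth:
  assumes A: "psd A"
  shows "\<exists>c\<ge>0. \<forall>w. (\<forall>k\<in>Ker A. inner w k = 0) \<longrightarrow> Re (qf B w) \<le> c * Re (qf A w)"
proof -
  define S where "S = sphere 0 1 \<inter> (\<Inter>k\<in>Ker A. {w. inner k w = 0})"
  define MB where "MB = (\<Sum>a\<in>UNIV. \<Sum>b\<in>UNIV. norm (B$a$b))"
  have MB0: "MB \<ge> 0" unfolding MB_def by (intro sum_nonneg) auto
  have inS: "(1 / norm w) *\<^sub>R w \<in> S" if "w \<noteq> 0" "\<forall>k\<in>Ker A. inner w k = 0" for w
    using that by (auto simp: S_def inner_commute)
  have Apos: "Re (qf A w) \<ge> 0" for w using A unfolding psd_def by blast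
  show ?thesis
  proof (cases "S = {}")
    case True
    show ?thesis
    proof (intro exI[of _ 0] conjI allI impI)
      fix w assume orth: "\<forall>k\<in>Ker A. inner w k = 0"
      then have "w = 0" using inS True by blast
      then show "Re (qf B w) \<le> 0 * Re (qf A w)" by simp
    qed simp
  next
    case False
    have "compact S" unfolding S_def
      by (intro compact_Int_closed compact_sphere closed_INT ballI closed_hyperplane)
    moreover have "continuous_on S (\<lambda>w. Re (qf A w))"
      unfolding bf_def by (intro continuous_intros)
    ultimately obtain w0 where w0: "w0 \<in> S" "\<And>y. y \<in> S \<Longrightarrow> Re (qf A w0) \<le> Re (qf A y)"
      using continuous_attains_inf[of S "\<lambda>w. Re (qf A w)"] False by blast
    define m where "m = Re (qf A w0)"
    have "m > 0"
    proof (rule ccontr)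
      assume "\<not> m > 0"
      hence "Re (qf A w0) = 0" using Apos m_def by (meson not_less order_antisym)
      moreover have "Im (qf A w0) = 0" using A unfolding psd_def by blast
      ultimately have "w0 \<in> Ker A" by (simp add: Ker_def complex_eq_iff)
      hence "inner w0 w0 = 0" using w0(1) by (auto simp: S_def)
      thus False using w0(1) by (auto simp: S_def)
    qed
    show ?thesis
    proof (intro exI[of _ "MB / m"] conjI allI impI)
      show "MB / m \<ge> 0" using MB0 \<open>m > 0\<close> by simp
      fix w assume orth: "\<forall>k\<in>Ker A. inner w k = 0"
      show "Re (qf B w) \<le> MB / m * Re (qf A w)"
      proof (cases "w = 0")
        case True then show ?thesis by simp
      next
        case False
        have "m \<le> Re (qf A ((1 / norm w) *\<^sub>R w))" using w0(2)[OF inS[OF False orth]] m_def by simp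
        also have "\<dots> = Re (qf A w) / (norm w)^2"
          by (simp add: qf_scaleR power_divide)
        finally have "m * (norm w)^2 \<le> Re (qf A w)" using False by (simp add: field_simps)
        hence "MB * (norm w)^2 \<le> MB / m * Re (qf A w)"
          using \<open>m > 0\<close> MB0 by (simp add: field_simps mult_left_mono)
        then show ?thesis using qf_bound[of B w] MB_def by simp
      qed
    qed
  qed
qed

lemma const_le:
  assumes A: "psd A" and B: "psd B" and K: "Ker A \<subseteq> Ker B"
  shows "\<exists>c\<ge>0. \<forall>v. Re (qf B v) \<le> c * Re (qf A v)"
proof -
  obtain c where c: "c \<ge> 0" "\<And>w. (\<forall>k\<in>Ker A. inner w k = 0) \<Longrightarrow> Re (qf B w) \<le> c * Re (qf A w)"
    using const_orth[OF A, of B] by blast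
  have "Re (qf B v) \<le> c * Re (qf A v)" for v
  proof -
    obtain y z where yz: "y \<in> span (Ker A)" "\<And>w. w \<in> span (Ker A) \<Longrightarrow> orthogonal z w" "v = y + z"
      using orthogonal_subspace_decomp_exists by blast
    have sp: "span (Ker A) = Ker A" using ker_subspace[OF A] by (simp add: span_eq_iff)
    have y: "y \<in> Ker A" using yz(1) sp by simp
    have z: "\<forall>k\<in>Ker A. inner z k = 0" using yz(2) sp by (simp add: orthogonal_def)
    have "qf A v = qf A z" using yz(3) ker_add1[OF A y] by simp
    moreover have "qf B v = qf B z" using yz(3) ker_add1[OF B] y K by auto
    ultimately show ?thesis using c(2)[OF z] by simp
  qed
  with c(1) show ?thesis by blast
qed



definition pos :: "(complex^'n^'n \<Rightarrow> complex^'n^'n) \<Rightarrow> bool" where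
  "pos \<beta> \<longleftrightarrow> (\<forall>A. psd A \<longrightarrow> psd (\<beta> A))"

lemma block1: "block_psd 1 (\<lambda>i j. A) \<longleftrightarrow> psd A"
proof
  assume "block_psd 1 (\<lambda>i j. A)"
  then show "psd A" unfolding block_psd_def psd_def bf_def Let_def
    apply (simp add: lessThan_Suc)
    apply (intro allI)
    apply (drule spec[of _ "\<lambda>_. v" for v])
    apply simp
    done
next
  assume "psd A"
  then show "block_psd 1 (\<lambda>i j. A)" unfolding block_psd_def psd_def bf_def Let_def
    by (simp add: lessThan_Suc)
qed

lemma cp_pos:
  fixes \<alpha> :: "complex^'n^'n \<Rightarrow> complex^'n^'n"
  assumes cp: "completely_positive \<alpha>"
  shows "pos \<alpha>"
  unfolding pos_def
proof (intro allI impI)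
  fix A :: "complex^'n^'n"
  assume "psd A"
  then have "block_psd 1 (\<lambda>i j. A)" using block1[of A] by blast
  then have "block_psd 1 (\<lambda>i j. \<alpha> A)" using cp unfolding completely_positive_def by blast
  then show "psd (\<alpha> A)" using block1[of "\<alpha> A"] by blast
qed

lemma lin_zero_map: "clinear_map \<beta> \<Longrightarrow> \<beta> 0 = 0"
  unfolding clinear_map_def by (metis add.right_neutral add_left_imp_eq)

lemma lin_diff: "clinear_map \<beta> \<Longrightarrow> \<beta> (A - B) = \<beta> A - \<beta> B"
  unfolding clinear_map_def by (metis add_diff_cancel_right' diff_add_cancel eq_diff_eq)

lemma lin_sum: "clinear_map \<beta> \<Longrightarrow> \<beta> (\<Sum>x\<in>F. f x) = (\<Sum>x\<in>F. \<beta> (f x))"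
proof (induction F rule: infinite_finite_induct)
  case (infinite A) then show ?case by (simp add: lin_zero_map)
next
  case empty then show ?case by (simp add: lin_zero_map)
next
  case (insert x F) then show ?case by (simp add: clinear_map_def)
qed

lemma lin_funpow: "clinear_map \<alpha> \<Longrightarrow> clinear_map (\<alpha> ^^ k)"
  by (induction k) (auto simp: clinear_map_def)

lemma pos_funpow: "pos \<alpha> \<Longrightarrow> pos (\<alpha> ^^ k)"
  by (induction k) (auto simp: pos_def)

lemma transfer:
  assumes L: "clinear_map \<beta>" and P: "pos \<beta>" and A: "psd A" and B: "psd B" and K: "Ker A \<subseteq> Ker B"
  shows "Ker (\<beta> A) \<subseteq> Ker (\<beta> B)"
proof
  obtain c where c: "c \<ge> 0" "\<And>v. Re (qf B v) \<le> c * Re (qf A v)"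
    using const_le[OF A B K] by blast
  define D where "D = mat_scale (complex_of_real c) A - B"
  have qD: "qf D v = complex_of_real c * qf A v - qf B v" for v
    by (simp add: D_def bf_minusM bf_scaleM)
  have "psd D" unfolding psd_def qD using A B c unfolding psd_def by auto
  hence pD: "psd (\<beta> D)" using P unfolding pos_def by blast
  have bD: "\<beta> D = mat_scale (complex_of_real c) (\<beta> A) - \<beta> B"
    using L by (simp add: D_def lin_diff clinear_map_def)
  fix v assume "v \<in> Ker (\<beta> A)"
  hence e: "qf (\<beta> D) v = - qf (\<beta> B) v" by (simp add: Ker_def bD bf_minusM bf_scaleM)
  have "Re (qf (\<beta> D) v) \<ge> 0" using pD unfolding psd_def by blast
  hence r: "Re (qf (\<beta> B) v) \<le> 0" using e by simp
  have "psd (\<beta> B)" using P B unfolding pos_def by blast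
  hence "Re (qf (\<beta> B) v) \<ge> 0" "Im (qf (\<beta> B) v) = 0" unfolding psd_def by blast+
  with r show "v \<in> Ker (\<beta> B)" unfolding Ker_def by (simp add: complex_eq_iff)
qed

lemma qf_one: "qf (mat 1) v = complex_of_real ((norm v)^2)"
proof -
  have m1: "mat 1 $ a $ b = (if a = b then 1 else (0::complex))" for a b by (simp add: mat_def)
  have "qf (mat 1) v = (\<Sum>a\<in>UNIV. \<Sum>b\<in>UNIV. if a = b then cnj (v$a) * v$b else 0)"
    unfolding bf_def m1 by (intro sum.cong refl) simp
  also have "\<dots> = (\<Sum>a\<in>UNIV. cnj (v$a) * v$a)" by (simp add: sum.delta)
  also have "\<dots> = (\<Sum>a\<in>UNIV. complex_of_real ((norm (v$a))^2))"
    by (intro sum.cong refl) (subst complex_norm_square, simp add: mult.commute)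
  also have "\<dots> = complex_of_real (\<Sum>a\<in>UNIV. (norm (v$a))^2)"
    by (simp only: of_real_sum)
  also have "\<dots> = complex_of_real ((norm v)^2)"
    by (simp add: norm_vec_def L2_set_def sum_nonneg)
  finally show ?thesis .
qed

lemma psd_one: "psd (mat 1)"
  unfolding psd_def qf_one by simp

lemma ker_one: "Ker (mat 1) \<subseteq> Ker X"
  by (auto simp: Ker_def qf_one)

lemma ax: "axis a (1::complex) $ i = (if i = a then 1 else 0)"
  unfolding axis_def by (rule vec_lambda_beta)

lemma mult_ifd: "x * (if P then 1 else 0) = (if P then x else (0::complex))" by simp

lemma cnj_ifd: "cnj (if P then 1 else 0) = (if P then 1 else (0::complex))" by simp

lemma bf_axis: "bf X (axis a 1) (axis b 1) = X $ a $ b"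
proof -
  have "bf X (axis a 1) (axis b 1) = (\<Sum>i\<in>UNIV. if i = a then (\<Sum>j\<in>UNIV. if j = b then X$i$j else 0) else 0)"
    unfolding bf_def ax by (intro sum.cong refl) (simp add: mult_ifd)
  also have "\<dots> = X $ a $ b" by (simp add: sum.delta)
  finally show ?thesis .
qed

lemma ker_univ:
  assumes P: "psd X" and K: "Ker X = UNIV"
  shows "X = 0"
proof -
  have "X $ a $ b = 0" for a b
  proof -
    have "axis a (1::complex) \<in> Ker X" using K by simp
    then have "qf X (axis a 1) = 0" unfolding Ker_def by simp
    then have "bf X (axis a 1) (axis b 1) = 0" using psd_ker[OF P] by blast
    then show ?thesis by (simp only: bf_axis)
  qed
  then show ?thesis by (simp add: vec_eq_iff)
qed



definition R :: "complex^'n \<Rightarrow> complex^'n \<Rightarrow> complex^'n^'n" where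
  "R x y = (\<chi> a b. x$a * cnj (y$b))"

lemma psd_R: "psd (R x x)"
proof -
  have eq: "qf (R x x) v = (\<Sum>a\<in>UNIV. cnj (v$a) * x$a) * cnj (\<Sum>b\<in>UNIV. cnj (v$b) * x$b)" for v
  proof -
    have "qf (R x x) v = (\<Sum>a\<in>UNIV. \<Sum>b\<in>UNIV. (cnj (v$a) * x$a) * cnj (cnj (v$b) * x$b))"
      unfolding bf_def R_def by (intro sum.cong refl) (simp add: mult_ac)
    also have "\<dots> = (\<Sum>a\<in>UNIV. cnj (v$a) * x$a) * cnj (\<Sum>b\<in>UNIV. cnj (v$b) * x$b)"
      by (simp only: cnj_sum sum_product)
    finally show ?thesis .
  qed
  have "qf (R x x) v = complex_of_real ((cmod (\<Sum>a\<in>UNIV. cnj (v$a) * x$a))^2)" for v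
    unfolding complex_norm_square eq by (rule refl)
  then show ?thesis unfolding psd_def by simp
qed

lemma polar: "mat_scale 4 (R x y) =
   R (x + y) (x + y) - R (x - y) (x - y) + mat_scale \<i> (R (x + \<i> *s y) (x + \<i> *s y))
   - mat_scale \<i> (R (x - \<i> *s y) (x - \<i> *s y))"
  by (simp add: vec_eq_iff R_def mat_scale_def algebra_simps)

lemma decomp: "M = (\<Sum>b\<in>UNIV. R (\<chi> i. M$i$b) (axis b 1))"
proof -
  have "(\<Sum>b\<in>UNIV. R (\<chi> i. M$i$b) (axis b 1)) $ i $ j = M $ i $ j" for i j
  proof -
    have "(\<Sum>b\<in>UNIV. R (\<chi> i. M$i$b) (axis b 1)) $ i $ j = (\<Sum>b\<in>UNIV. if j = b then M$i$b else 0)"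
      by (simp add: sum_component R_def ax cnj_ifd mult_ifd)
    also have "\<dots> = M $ i $ j" by (simp add: sum.delta)
    finally show ?thesis .
  qed
  then show ?thesis by (simp add: vec_eq_iff)
qed

lemma kills_all:
  assumes L: "clinear_map \<beta>" and Z: "\<And>x. \<beta> (R x x) = 0"
  shows "\<beta> M = 0"
proof -
  have lin: "\<beta> (A + B) = \<beta> A + \<beta> B" "\<beta> (mat_scale c A) = mat_scale c (\<beta> A)" for A B c
    using L unfolding clinear_map_def by auto
  have "\<beta> (R x y) = 0" for x y
  proof -
    have ms0: "mat_scale c (0 :: complex^'n^'n) = 0" for c by (simp add: mat_scale_def vec_eq_iff)
    have "\<beta> (mat_scale 4 (R x y)) = 0"
      by (simp only: polar lin_diff[OF L] lin Z ms0) simp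
    then have "mat_scale 4 (\<beta> (R x y)) = 0" by (simp only: lin)
    then have "mat_scale (1/4) (mat_scale 4 (\<beta> (R x y))) = mat_scale (1/4) 0" by simp
    then have "mat_scale (1/4) (mat_scale 4 (\<beta> (R x y))) = 0" by (simp add: ms0)
    moreover have "mat_scale (1/4) (mat_scale 4 M) = M" for M :: "complex^'n^'n"
      by (simp add: mat_scale_def vec_eq_iff)
    ultimately show ?thesis by metis
  qed
  then show ?thesis by (subst decomp) (simp add: lin_sum[OF L])
qed

theorem lemma8p4:
  fixes \<alpha> :: "complex^'n^'n \<Rightarrow> complex^'n^'n" and m :: nat
  assumes "clinear_map \<alpha>"
    and "completely_positive \<alpha>"
    and "m \<ge> 1"
    and "(\<alpha> ^^ m) = (\<lambda>_. 0)"
  shows "(\<alpha> ^^ CARD('n)) = (\<lambda>_. 0)"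
proof -
  have L: "clinear_map \<alpha>" and Pa: "pos \<alpha>" using assms(1,2) cp_pos by auto
  have Lk: "clinear_map (\<alpha>^^k)" and Pk: "pos (\<alpha>^^k)" for k
    using lin_funpow[OF L] pos_funpow[OF Pa] by auto
  define P where "P k = (\<alpha>^^k) (mat 1)" for k
  define N where "N k = Ker (P k)" for k
  have psdP: "psd (P k)" for k using Pk psd_one unfolding pos_def P_def by blast
  have PSuc: "\<alpha> (P k) = P (Suc k)" for k by (simp add: P_def)
  have mono: "N k \<subseteq> N (Suc k)" for k
  proof -
    have "Ker ((\<alpha>^^k) (mat 1)) \<subseteq> Ker ((\<alpha>^^k) (\<alpha> (mat 1)))"
      by (rule transfer[OF Lk Pk psd_one]) (use psdP[of 1] in \<open>simp_all add: P_def ker_one\<close>)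
    then show ?thesis by (simp add: N_def P_def funpow_Suc_right del: funpow.simps)
  qed
  have z0: "(\<alpha>^^i) 0 = 0" for i using lin_zero_map[OF Lk] .
  have Pzero: "P j = 0" if "j \<ge> m" for j
  proof -
    have "\<alpha>^^j = \<alpha>^^(j - m) \<circ> \<alpha>^^m" using that by (simp flip: funpow_add)
    then show ?thesis using assms(4) z0 by (simp add: P_def)
  qed
  have Nfull: "N j = UNIV" if "j \<ge> m" for j
    using Pzero[OF that] by (simp add: N_def Ker_def)
  have stable: "N k = UNIV" if h: "N (Suc k) \<subseteq> N k" for k
  proof -
    have s1: "N (Suc (k + j)) \<subseteq> N (k + j)" for j
    proof (induction j)
      case 0 then show ?case using h by simp
    next
      case (Suc j)
      have "Ker (\<alpha> (P (Suc (k + j)))) \<subseteq> Ker (\<alpha> (P (k + j)))"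
        using transfer[OF L Pa psdP psdP] Suc.IH unfolding N_def by blast
      then show ?case by (simp add: PSuc N_def)
    qed
    have s2: "N (k + j) \<subseteq> N k" for j
    proof (induction j)
      case 0 then show ?case by simp
    next
      case (Suc j) then show ?case using s1[of j] by simp
    qed
    have "N (k + m) = UNIV" by (rule Nfull) simp
    then show ?thesis using s2[of m] by (simp add: top_le)
  qed
  have vsub: "vec.subspace (N k)" for k unfolding N_def using ker_vsubspace psdP by blast
  have dims: "N k = UNIV \<or> vec.dim (N k) \<ge> k" for k
  proof (induction k)
    case 0 then show ?case by simp
  next
    case (Suc k)
    show ?case
    proof (cases "N k = UNIV")
      case True then show ?thesis using mono[of k] by auto
    next
      case False
      then have "N (Suc k) \<noteq> N k" using stable by blast
      then have "N k \<subset> N (Suc k)" using mono[of k] by blast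
      then have "vec.dim (N k) < vec.dim (N (Suc k))"
        using vec.dim_psubset vsub by (metis vec.span_eq_iff)
      then show ?thesis using Suc.IH False by simp
    qed
  qed
  have NS: "N CARD('n) = UNIV"
  proof (cases "N CARD('n) = UNIV")
    case False
    then have "vec.dim (N CARD('n)) \<ge> CARD('n)" using dims by blast
    moreover have "vec.dim (UNIV :: (complex^'n) set) = CARD('n)" by (rule vec_dim_card)
    ultimately have "vec.dim (UNIV :: (complex^'n) set) \<le> vec.dim (N CARD('n))" by linarith
    then show ?thesis using vec.subspace_dim_equal[OF vsub vec.subspace_UNIV] by blast
  qed
  have PS: "P CARD('n) = 0" using ker_univ[OF psdP NS[unfolded N_def]] .
  have psd0: "(\<alpha>^^CARD('n)) X = 0" if "psd X" for X
  proof -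
    have "Ker (P CARD('n)) \<subseteq> Ker ((\<alpha>^^CARD('n)) X)"
      unfolding P_def by (rule transfer[OF Lk Pk psd_one that ker_one])
    then have "Ker ((\<alpha>^^CARD('n)) X) = UNIV" using NS unfolding N_def by blast
    then show ?thesis using ker_univ Pk that unfolding pos_def by blast
  qed
  show ?thesis
    using kills_all[OF Lk] psd0[OF psd_R] by (auto simp: fun_eq_iff)
qed

end
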